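(* Let $e_1,\dots,e_k\in\mathbb{C}^{n\times n}$ be an anticommuting family and let $r:=\min_{i\in[k]}\mathrm{rk}(e_i^2)$. (1) If $r>n(1-1/c)$ for some positive integer $c$, then $k\le c\,n^{2/c}$. (2) If $r> n\left(1-\frac{1}{2(\log_2 n+1)}\right)$, then $k\le 2\log_2 n+1$.
   Context: A family $e_1,\dots,e_k$ of complex $n\times n$ matrices is called anticommuting if $e_ie_j=-e_je_i$ for all distinct $i,j\in[k]=\{1,\dots,k\}$. $\mathrm{rk}$ denotes matrix rank. *)

theory Defs
  imports "HOL-Analysis.Analysis"
begin

text \<open>A family e_0,...,e_(k-1) of complex n x n matrices (n = CARD('n)) is anticommuting
  if e_i e_j = - e_j e_i for all distinct indices i, j.\<close>
definition anticommuting :: "nat \<Rightarrow> (nat \<Rightarrow> complex^'n^'n) \<Rightarrow> bool" where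
  "anticommuting k e \<longleftrightarrow> (\<forall>i<k. \<forall>j<k. i \<noteq> j \<longrightarrow> e i ** e j = - (e j ** e i))"

end

theory Submission
  imports Defs
begin

lemma rn:
  fixes f :: "'a::field^'n \<Rightarrow> 'a^'m"
  assumes lin: "Vector_Spaces.linear (*s) (*s) f" and V: "vec.subspace V"
  shows "vec.dim (f ` V) + vec.dim (V \<inter> {x. f x = 0}) = vec.dim V"
proof -
  interpret lf: Vector_Spaces.linear "(*s)" "(*s)" f by (rule lin)
  have pax: "finite_dimensional_vector_space_pair_1 (*s) (cart_basis::('a^'n) set) ((*s)::'a\<Rightarrow>'a^'m\<Rightarrow>'a^'m)"
    by unfold_locales
  let ?K = "V \<inter> {x. f x = 0}"
  obtain B0 where B0: "B0 \<subseteq> ?K" "vec.independent B0" "?K \<subseteq> vec.span B0" "card B0 = vec.dim ?K"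
    using vec.basis_exists by blast
  obtain B where B: "B0 \<subseteq> B" "B \<subseteq> V" "vec.independent B" "V \<subseteq> vec.span B"
    using vec.maximal_independent_subset_extend[of B0 V] B0 by blast
  have finB: "finite B" using B(3) vec.finiteI_independent by blast
  have cardB: "card B = vec.dim V" using vec.dim_unique[OF B(2) B(4) B(3) refl] by simp
  let ?C = "B - B0"
  have spanB: "vec.span B = V" using vec.span_subspace[OF B(2) B(4) V] .
  have inj0: "x = 0" if x: "x \<in> vec.span ?C" "f x = 0" for x
  proof -
    have "vec.span ?C \<subseteq> vec.span B" by (rule vec.span_mono) auto
    with x spanB have "x \<in> ?K" by auto
    with B0 have xB0: "x \<in> vec.span B0" by auto
    have finB0: "finite B0" and finC: "finite ?C" using finB B(1) finite_subset by auto
    obtain u where u: "x = (\<Sum>v\<in>B0. u v *s v)" using xB0 vec.span_finite[OF finB0] by auto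
    obtain w where w: "x = (\<Sum>v\<in>?C. w v *s v)" using x(1) vec.span_finite[OF finC] by auto
    define t where "t v = (if v \<in> B0 then u v else - w v)" for v
    have "(\<Sum>v\<in>B. t v *s v) = (\<Sum>v\<in>B0. t v *s v) + (\<Sum>v\<in>?C. t v *s v)"
      using sum.subset_diff[OF B(1) finB] by (simp add: add.commute)
    also have "(\<Sum>v\<in>B0. t v *s v) = x" unfolding u t_def by (rule sum.cong) auto
    also have "(\<Sum>v\<in>?C. t v *s v) = - x" unfolding w t_def
      by (simp add: sum_negf[symmetric] vec.scale_minus_left)
    finally have "(\<Sum>v\<in>B. t v *s v) = 0" by simp
    then have "\<forall>v\<in>B. t v = 0" using B(3) vec.independent_explicit by blast
    then have "\<forall>v\<in>?C. w v = 0" unfolding t_def by auto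
    then show "x = 0" unfolding w by simp
  qed
  have inj: "inj_on f (vec.span ?C)"
  proof (rule inj_onI)
    fix x y assume "x \<in> vec.span ?C" "y \<in> vec.span ?C" "f x = f y"
    then have "x - y = 0" using inj0[of "x - y"] vec.span_diff lf.diff by auto
    then show "x = y" by simp
  qed
  have indC: "vec.independent ?C" using B(3) vec.independent_mono by blast
  have d1: "vec.dim (f ` ?C) = card ?C"
    using finite_dimensional_vector_space_pair_1.dim_image_eq[OF pax lin inj] vec.dim_eq_card_independent[OF indC] by simp
  have "f ` B \<subseteq> insert 0 (f ` ?C)" using B0(1) by auto
  then have "vec.span (f ` B) \<subseteq> vec.span (f ` ?C)"
    by (metis vec.span_insert_0 vec.span_mono)
  moreover have "vec.span (f ` ?C) \<subseteq> vec.span (f ` B)" by (rule vec.span_mono) auto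
  ultimately have "vec.span (f ` B) = vec.span (f ` ?C)" by blast
  then have "vec.dim (f ` V) = vec.dim (f ` ?C)"
    by (metis spanB lf.span_image vec.dim_span)
  moreover have "card ?C = card B - card B0" using B(1) finB by (simp add: card_Diff_subset finite_subset)
  moreover have "card B0 \<le> card B" using B(1) finB by (simp add: card_mono)
  ultimately show ?thesis using d1 cardB B0(4) by simp
qed

lemma lin_vm: "Vector_Spaces.linear (*s) (*s) (\<lambda>x. x v* (A::'a::field^'n^'m))"
proof -
  have "(\<lambda>x. x v* A) = (*v) (transpose A)" by (simp add: fun_eq_iff)
  then show ?thesis using matrix_vector_mul_linear_gen by metis
qed

lemma rank_range:
  fixes A :: "'a::field^'n^'m"
  shows "rank A = vec.dim (range (\<lambda>x. x v* A))"
proof -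
  have r: "row i A = axis i 1 v* A" for i
    by (simp add: vec_eq_iff vector_matrix_mult_def axis_def row_def if_distrib if_distribR sum.delta cong: if_cong)
  have e: "x v* A = (\<Sum>i\<in>UNIV. x$i *s row i A)" for x
    by (simp add: vec_eq_iff vector_matrix_mult_def row_def sum_component)
  have "rows A \<subseteq> vec.span (range (\<lambda>x. x v* A))"
    using r by (auto simp: rows_def intro!: vec.span_base)
  moreover have "range (\<lambda>x. x v* A) \<subseteq> vec.span (rows A)"
  proof
    fix y assume "y \<in> range (\<lambda>x. x v* A)"
    then obtain x where y: "y = x v* A" by auto
    show "y \<in> vec.span (rows A)" unfolding y e
      by (intro vec.span_sum vec.span_scale vec.span_base) (auto simp: rows_def)
  qed
  ultimately have "vec.span (rows A) = vec.span (range (\<lambda>x. x v* A))"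
    using vec.span_eq by blast
  then show ?thesis unfolding row_rank_def_gen by (metis vec.dim_span)
qed

lemma rank_le_card: "rank (A::'a::field^'n^'m) \<le> CARD('n)"
  unfolding row_rank_def_gen by (rule dim_subset_UNIV_cart_gen)

lemma rank_mat1: "rank (mat 1::'a::field^'n^'n) = CARD('n)"
proof -
  have "range (\<lambda>x::'a^'n. x v* mat 1) = UNIV" by simp
  then show ?thesis by (simp add: rank_range card_cart_basis)
qed

lemma rank_zero: "rank (0::'a::field^'n^'m) = 0"
proof -
  have "range (\<lambda>x::'a^'m. x v* (0::'a^'n^'m)) = {0}" by auto
  moreover have "vec.dim {0::'a^'n} = 0"
    by (metis vec.dim_span vec.dim_empty vec.span_insert_0 vec.span_empty)
  ultimately show ?thesis by (simp add: rank_range)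
qed

lemma sylvester:
  fixes A :: "'a::field^'n^'m" and B :: "'a::field^'p^'n"
  shows "rank A + rank B \<le> rank (A ** B) + CARD('n)"
proof -
  let ?f = "\<lambda>x. x v* A" and ?g = "\<lambda>y. y v* B"
  interpret lf: Vector_Spaces.linear "(*s)" "(*s)" ?f by (rule lin_vm)
  have "range (\<lambda>x. x v* (A ** B)) = ?g ` range ?f"
    by (auto simp: vector_matrix_mul_assoc[symmetric])
  then have r1: "rank (A ** B) = vec.dim (?g ` range ?f)" by (simp add: rank_range)
  have sub: "vec.subspace (range ?f)" using lf.subspace_image[OF vec.subspace_UNIV] .
  have 1: "vec.dim (?g ` range ?f) + vec.dim (range ?f \<inter> {x. ?g x = 0}) = rank A"
    using rn[OF lin_vm sub] by (simp add: rank_range)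
  have 2: "rank B + vec.dim (UNIV \<inter> {x. ?g x = 0}) = CARD('n)"
    using rn[OF lin_vm vec.subspace_UNIV] by (simp add: rank_range card_cart_basis)
  have "vec.dim (range ?f \<inter> {x. ?g x = 0}) \<le> vec.dim (UNIV \<inter> {x. ?g x = 0})"
    by (rule vec.dim_subset) auto
  with 1 2 r1 show ?thesis by linarith
qed



definition sm :: "complex \<Rightarrow> complex^'n^'n \<Rightarrow> complex^'n^'n" where
  "sm c M = (\<chi> i j. c * M$i$j)"

lemma sm_mult_left: "sm c (M ** N) = sm c M ** N"
  by (simp add: sm_def vec_eq_iff matrix_matrix_mult_def sum_distrib_left mult.assoc)

lemma sm_mult_right: "M ** sm c N = sm c (M ** N)"
  by (simp add: sm_def vec_eq_iff matrix_matrix_mult_def sum_distrib_left mult_ac)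

lemma sm_sm [simp]: "sm c (sm d M) = sm (c*d) M"
  by (simp add: sm_def vec_eq_iff mult.assoc)

lemma sm_one [simp]: "sm 1 M = M" and sm_zero [simp]: "sm 0 M = 0" and sm_zero2 [simp]: "sm c 0 = 0"
  by (simp_all add: sm_def vec_eq_iff)

lemma sm_diff: "sm c M - sm d M = sm (c - d) M"
  by (simp add: sm_def vec_eq_iff algebra_simps)

lemma sm_diff2: "sm c (M - N) = sm c M - sm c N"
  by (simp add: sm_def vec_eq_iff algebra_simps)

lemma sm_eq0: "sm c M = 0 \<longleftrightarrow> c = 0 \<or> M = 0"
  by (auto simp: sm_def vec_eq_iff)

lemma sm_neg: "sm (-1) M = - M"
  by (simp add: sm_def vec_eq_iff)

lemma neg_mult_left: "(- M) ** (N::complex^'n^'n) = - (M ** N)"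
  by (simp add: vec_eq_iff matrix_matrix_mult_def sum_negf)

lemma add_mult_left: "(A + B) ** (C::complex^'n^'n) = A ** C + B ** C"
  by (simp add: vec_eq_iff matrix_matrix_mult_def distrib_right sum.distrib)

lemma sum_mult_left: "(\<Sum>s\<in>F. f s) ** (N::complex^'n^'n) = (\<Sum>s\<in>F. f s ** N)"
  by (induction F rule: infinite_finite_induct) (simp_all add: add_mult_left)

lemma sum_mult_right: "(N::complex^'n^'n) ** (\<Sum>s\<in>F. f s) = (\<Sum>s\<in>F. N ** f s)"
  by (induction F rule: infinite_finite_induct) (simp_all add: matrix_add_ldistrib)

lemma sm_sum: "sm c (\<Sum>s\<in>F. f s) = (\<Sum>s\<in>F. sm c (f s))"
  by (simp add: sm_def vec_eq_iff sum_distrib_left sum_component)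

definition Q :: "(nat \<Rightarrow> complex^'n^'n) \<Rightarrow> nat list \<Rightarrow> complex^'n^'n" where
  "Q e xs = foldr (\<lambda>t M. e t ** M) xs (mat 1)"

definition W :: "(nat \<Rightarrow> complex^'n^'n) \<Rightarrow> nat list \<Rightarrow> complex^'n^'n" where
  "W e xs = foldr (\<lambda>t M. (e t ** e t) ** M) xs (mat 1)"

lemma Q_Nil [simp]: "Q e [] = mat 1" and Q_Cons [simp]: "Q e (t#xs) = e t ** Q e xs"
  by (simp_all add: Q_def)

lemma W_Nil [simp]: "W e [] = mat 1" and W_Cons [simp]: "W e (t#xs) = (e t ** e t) ** W e xs"
  by (simp_all add: W_def)

lemma comm:
  assumes anti: "anticommuting k e" and j: "j < k" and xs: "set xs \<subseteq> {..<k}" "distinct xs"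
  shows "e j ** Q e xs = sm ((-1) ^ (length xs + (if j \<in> set xs then 1 else 0))) (Q e xs ** e j)"
  using xs
proof (induction xs)
  case Nil
  then show ?case by simp
next
  case (Cons x xs)
  have IH: "e j ** Q e xs = sm ((-1) ^ (length xs + (if j \<in> set xs then 1 else 0))) (Q e xs ** e j)"
    using Cons by auto
  have ex: "e j ** e x = sm ((-1) ^ (if x = j then 0 else 1)) (e x ** e j)"
  proof (cases "x = j")
    case True
    then show ?thesis by simp
  next
    case False
    have "x < k" using Cons.prems(1) by auto
    then have "e j ** e x = - (e x ** e j)" using anti j False unfolding anticommuting_def by blast
    then show ?thesis using False by (simp add: sm_neg)
  qed
  have "e j ** Q e (x#xs) = (e j ** e x) ** Q e xs" by (simp add: matrix_mul_assoc)
  also have "\<dots> = sm ((-1) ^ (if x = j then 0 else 1)) (e x ** (e j ** Q e xs))"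
    by (simp add: ex sm_mult_left[symmetric] matrix_mul_assoc)
  also have "\<dots> = sm ((-1) ^ (if x = j then 0 else 1) * (-1) ^ (length xs + (if j \<in> set xs then 1 else 0))) (e x ** (Q e xs ** e j))"
    by (simp add: IH sm_mult_right)
  also have "(-1::complex) ^ (if x = j then 0 else 1) * (-1) ^ (length xs + (if j \<in> set xs then 1 else 0))
      = (-1) ^ (length (x#xs) + (if j \<in> set (x#xs) then 1 else 0))"
    using Cons.prems(2) by (auto simp: power_add)
  finally show ?case by (simp add: matrix_mul_assoc)
qed

lemma QQ:
  assumes anti: "anticommuting k e" and xs: "set xs \<subseteq> {..<k}" "distinct xs"
  shows "\<exists>m. Q e xs ** Q e xs = sm ((-1) ^ m) (W e xs)"
  using xs
proof (induction xs)
  case Nil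
  show ?case by (rule exI[of _ 0]) simp
next
  case (Cons t xs)
  then obtain m where m: "Q e xs ** Q e xs = sm ((-1) ^ m) (W e xs)" by auto
  have c: "e t ** Q e xs = sm ((-1) ^ length xs) (Q e xs ** e t)"
    using comm[OF anti, of t xs] Cons.prems by auto
  have c2: "Q e xs ** e t = sm ((-1) ^ length xs) (e t ** Q e xs)"
    by (simp add: c power_add[symmetric])
  have "Q e (t#xs) ** Q e (t#xs) = e t ** ((Q e xs ** e t) ** Q e xs)"
    by (simp add: matrix_mul_assoc)
  also have "\<dots> = sm ((-1) ^ length xs) ((e t ** e t) ** (Q e xs ** Q e xs))"
    by (simp add: c2 sm_mult_left[symmetric] sm_mult_right matrix_mul_assoc)
  also have "\<dots> = sm ((-1) ^ (length xs + m)) (W e (t#xs))"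
    by (simp add: m sm_mult_right power_add)
  finally show ?case by blast
qed


definition pj :: "(nat \<Rightarrow> complex^'n^'n) \<Rightarrow> nat \<Rightarrow> nat \<Rightarrow> nat \<Rightarrow> complex^'n^'n \<Rightarrow> complex^'n^'n" where
  "pj e p l j Y = e j ** Y - sm ((-1)^(p+l)) (Y ** e j)"

fun PP :: "(nat \<Rightarrow> complex^'n^'n) \<Rightarrow> nat \<Rightarrow> nat list \<Rightarrow> complex^'n^'n \<Rightarrow> complex^'n^'n" where
  "PP e p [] Y = Y"
| "PP e p (t#ts) Y = pj e p (length ts) t (PP e p ts Y)"

definition E :: "(nat \<Rightarrow> complex^'n^'n) \<Rightarrow> nat set \<Rightarrow> complex^'n^'n" where
  "E e S = Q e (sorted_list_of_set S)"

lemma pj_sm: "pj e p l j (sm a Y) = sm a (pj e p l j Y)"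
  by (simp add: pj_def sm_mult_right sm_mult_left[symmetric] sm_diff2 mult.commute)

lemma pj_lin: "pj e p l j (\<Sum>S\<in>F. sm (a S) (Y S)) = (\<Sum>S\<in>F. sm (a S) (pj e p l j (Y S)))"
proof -
  have "pj e p l j (\<Sum>S\<in>F. sm (a S) (Y S)) = (\<Sum>S\<in>F. pj e p l j (sm (a S) (Y S)))"
    by (simp add: pj_def sum_mult_right sum_mult_left sm_sum sum_subtractf)
  then show ?thesis by (simp add: pj_sm)
qed

lemma PP_lin: "PP e p ts (\<Sum>S\<in>F. sm (a S) (Y S)) = (\<Sum>S\<in>F. sm (a S) (PP e p ts (Y S)))"
  by (induction ts) (simp_all add: pj_lin)

lemma PP_zero [simp]: "PP e p ts 0 = 0"
  by (induction ts) (simp_all add: pj_def)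

lemma m1_parity: "even a = even b \<Longrightarrow> (-1::complex)^a = (-1)^b"
  by (simp add: minus_one_power_iff)

lemma PP_E:
  assumes anti: "anticommuting k e" and S: "S \<subseteq> {..<k}" "even (card S) = even p"
    and ts: "set ts \<subseteq> {..<k}" "distinct ts"
  shows "PP e p ts (E e S) = (if set ts \<subseteq> S then sm ((-2 * (-1)^p)^length ts) (E e S ** Q e ts) else 0)"
  using ts
proof (induction ts)
  case Nil
  then show ?case by simp
next
  case (Cons t ts)
  have IH: "PP e p ts (E e S) = (if set ts \<subseteq> S then sm ((-2 * (-1)^p)^length ts) (E e S ** Q e ts) else 0)"
    using Cons by auto
  show ?case
  proof (cases "set ts \<subseteq> S")
    case False
    then show ?thesis using IH by (simp add: pj_def)
  next
    case True
    let ?k = "(-2 * (-1)^p)^length ts :: complex"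
    let ?Z = "E e S ** Q e (t#ts)"
    have finS: "finite S" using S(1) finite_subset by blast
    have t: "t < k" "t \<notin> set ts" using Cons.prems by auto
    have c1: "e t ** E e S = sm ((-1) ^ (card S + (if t \<in> S then 1 else 0))) (E e S ** e t)"
      unfolding E_def using comm[OF anti t(1), of "sorted_list_of_set S"] S finS by auto
    have c2: "Q e ts ** e t = sm ((-1) ^ length ts) (e t ** Q e ts)"
    proof -
      have "e t ** Q e ts = sm ((-1) ^ length ts) (Q e ts ** e t)"
        using comm[OF anti t(1), of ts] Cons.prems t by auto
      then show ?thesis by (simp add: power_add[symmetric])
    qed
    have a1: "e t ** (E e S ** Q e ts) = sm ((-1) ^ (card S + (if t \<in> S then 1 else 0))) ?Z"
      by (simp add: matrix_mul_assoc c1 sm_mult_left[symmetric])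
    have a2: "(E e S ** Q e ts) ** e t = sm ((-1) ^ length ts) ?Z"
      by (simp add: matrix_mul_assoc[symmetric] c2 sm_mult_right)
    have pS: "(-1::complex) ^ card S = (-1) ^ p" using S(2) by (rule m1_parity)
    have "PP e p (t#ts) (E e S) = sm (?k * ((-1) ^ (card S + (if t \<in> S then 1 else 0)) - (-1)^(p + length ts) * (-1) ^ length ts)) ?Z"
      using True IH by (simp add: pj_def sm_mult_right sm_mult_left[symmetric] a1 a2 sm_diff algebra_simps)
    also have "?k * ((-1) ^ (card S + (if t \<in> S then 1 else 0)) - (-1)^(p + length ts) * (-1) ^ length ts)
       = (if t \<in> S then (-2 * (-1)^p)^length (t#ts) else 0)"
    proof -
      have h: "(-1::complex)^(p + length ts) * (-1) ^ length ts = (-1)^p"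
        by (simp add: power_add mult.assoc power_mult_distrib[symmetric])
      show ?thesis unfolding h by (simp add: power_add pS)
    qed
    finally show ?thesis using True by auto
  qed
qed


lemma core:
  fixes p :: nat
  assumes anti: "anticommuting k e" and F: "F \<subseteq> Pow {..<k}" and par: "\<forall>S\<in>F. even (card S) = even p"
    and Wnz: "\<forall>S\<in>F. W e (sorted_list_of_set S) \<noteq> 0"
    and sum0: "(\<Sum>S\<in>F. sm (a S) (E e S)) = 0"
  shows "\<forall>S\<in>F. a S = 0"
proof (rule ccontr)
  assume ne: "\<not> (\<forall>S\<in>F. a S = 0)"
  let ?G = "{S\<in>F. a S \<noteq> 0}"
  have finF: "finite F" using F by (meson finite_Pow_iff finite_lessThan finite_subset)
  have G: "?G \<noteq> {}" "finite ?G" using ne finF by auto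
  obtain T where T: "T \<in> ?G" "card T = Max (card ` ?G)"
  proof -
    have "Max (card ` ?G) \<in> card ` ?G" using G by (intro Max_in) auto
    then show ?thesis using that by auto
  qed
  have maxT: "card S \<le> card T" if "S \<in> ?G" for S
    using T(2) Max_ge[of "card ` ?G" "card S"] G that by auto
  let ?ts = "sorted_list_of_set T"
  have Tk: "T \<subseteq> {..<k}" using T F by auto
  have finT: "finite T" using Tk finite_subset by blast
  have ts: "set ?ts = T" "distinct ?ts" using finT by auto
  let ?kap = "(-2 * (-1)^p)^length ?ts :: complex"
  have "0 = PP e p ?ts (\<Sum>S\<in>F. sm (a S) (E e S))" by (simp add: sum0)
  also have "\<dots> = (\<Sum>S\<in>F. sm (a S) (PP e p ?ts (E e S)))" by (rule PP_lin)
  also have "\<dots> = (\<Sum>S\<in>F. sm (a S) (if T \<subseteq> S then sm ?kap (E e S ** Q e ?ts) else 0))"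
  proof (rule sum.cong[OF refl])
    fix S assume "S \<in> F"
    then have "S \<subseteq> {..<k}" "even (card S) = even p" using F par by auto
    then show "sm (a S) (PP e p ?ts (E e S)) = sm (a S) (if T \<subseteq> S then sm ?kap (E e S ** Q e ?ts) else 0)"
      using PP_E[OF anti _ _ _ ts(2), of S p] ts Tk by simp
  qed
  also have "\<dots> = sm (a T) (sm ?kap (E e T ** Q e ?ts))"
  proof -
    have "(\<Sum>S\<in>F. sm (a S) (if T \<subseteq> S then sm ?kap (E e S ** Q e ?ts) else 0))
       = sm (a T) (if T \<subseteq> T then sm ?kap (E e T ** Q e ?ts) else 0)
         + (\<Sum>S\<in>F - {T}. sm (a S) (if T \<subseteq> S then sm ?kap (E e S ** Q e ?ts) else 0))"
      by (rule sum.remove[OF finF]) (use T in blast)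
    also have "(\<Sum>S\<in>F - {T}. sm (a S) (if T \<subseteq> S then sm ?kap (E e S ** Q e ?ts) else 0)) = 0"
    proof (rule sum.neutral, rule ballI)
      fix S assume S: "S \<in> F - {T}"
      show "sm (a S) (if T \<subseteq> S then sm ?kap (E e S ** Q e ?ts) else 0) = 0"
      proof (cases "a S = 0")
        case False
        then have "S \<in> ?G" using S by auto
        then have "card S \<le> card T" by (rule maxT)
        moreover have "finite S" using S F finite_subset by blast
        ultimately have "\<not> T \<subseteq> S" using S card_subset_eq[of S T] by (metis DiffD2 card_seteq singletonI)
        then show ?thesis by simp
      qed simp
    qed
    finally show ?thesis by simp
  qed
  finally have z: "sm (a T * ?kap) (Q e ?ts ** Q e ?ts) = 0" by (simp add: E_def)
  obtain m where "Q e ?ts ** Q e ?ts = sm ((-1) ^ m) (W e ?ts)"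
    using QQ[OF anti, of ?ts] ts Tk by auto
  moreover have "W e ?ts \<noteq> 0" using Wnz T by auto
  moreover have "a T \<noteq> 0" using T by auto
  moreover have "?kap \<noteq> 0" by simp
  ultimately show False using z by (simp add: sm_eq0)
qed

definition fl :: "complex^'n^'n \<Rightarrow> complex^('n\<times>'n)" where
  "fl M = (\<chi> ij. M $ fst ij $ snd ij)"

lemma fl_sm: "fl (sm c M) = c *s fl M"
  by (simp add: fl_def sm_def vec_eq_iff)

lemma fl_sum: "fl (\<Sum>S\<in>F. f S) = (\<Sum>S\<in>F. fl (f S))"
  by (simp add: fl_def vec_eq_iff sum_component)

lemma fl_inj: "inj fl"
proof (rule injI)
  fix M N :: "complex^'n^'n" assume "fl M = fl N"
  then have "\<forall>i j. M$i$j = N$i$j" by (auto simp: fl_def vec_eq_iff)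
  then show "M = N" by (simp add: vec_eq_iff)
qed

lemma fl_0: "fl 0 = 0" by (simp add: fl_def vec_eq_iff)

lemma count:
  fixes p :: nat and e :: "nat \<Rightarrow> complex^'n^'n"
  assumes anti: "anticommuting k e" and F: "F \<subseteq> Pow {..<k}" and par: "\<forall>S\<in>F. even (card S) = even p"
    and Wnz: "\<forall>S\<in>F. W e (sorted_list_of_set S) \<noteq> 0"
  shows "card F \<le> CARD('n) * CARD('n)"
proof -
  have finF: "finite F" using F by (meson finite_Pow_iff finite_lessThan finite_subset)
  have ind: "\<forall>S\<in>F. a S = 0" if "(\<Sum>S\<in>F. sm (a S) (E e S)) = 0" for a
    using core[OF anti F par Wnz that] .
  have inj: "inj_on (E e) F"
  proof (rule inj_onI, rule ccontr)
    fix S S' assume SS: "S \<in> F" "S' \<in> F" "E e S = E e S'" "S \<noteq> S'"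
    define a :: "nat set \<Rightarrow> complex" where "a X = (if X = S then 1 else if X = S' then -1 else 0)" for X
    have "(\<Sum>X\<in>F. sm (a X) (E e X)) = (\<Sum>X\<in>{S,S'}. sm (a X) (E e X))"
      by (rule sum.mono_neutral_right) (use finF SS in \<open>auto simp: a_def\<close>)
    also have "\<dots> = 0" using SS by (simp add: a_def sm_neg)
    finally have "a S = 0" using ind SS by blast
    then show False by (simp add: a_def)
  qed
  let ?f = "fl \<circ> E e"
  have inj2: "inj_on ?f F" by (rule comp_inj_on[OF inj inj_on_subset[OF fl_inj subset_UNIV]])
  let ?V = "?f ` F"
  have "vec.independent ?V"
    unfolding vec.independent_explicit
  proof (intro conjI allI impI ballI)
    show "finite ?V" using finF by simp
  next
    fix c v assume c: "(\<Sum>v\<in>?V. c v *s v) = 0" and v: "v \<in> ?V"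
    have "(\<Sum>v\<in>?V. c v *s v) = (\<Sum>S\<in>F. c (?f S) *s ?f S)"
      using sum.reindex[OF inj2, of "\<lambda>v. c v *s v"] by simp
    also have "\<dots> = fl (\<Sum>S\<in>F. sm (c (?f S)) (E e S))"
      by (simp add: fl_sum fl_sm)
    finally have "fl (\<Sum>S\<in>F. sm (c (?f S)) (E e S)) = fl 0" using c fl_0 by simp
    then have "(\<Sum>S\<in>F. sm (c (?f S)) (E e S)) = 0" using fl_inj by (meson injD)
    then have "\<forall>S\<in>F. c (?f S) = 0" by (rule ind)
    then show "c v = 0" using v by auto
  qed
  then have "card ?V \<le> vec.dim ?V" using vec.independent_bound_general by blast
  also have "\<dots> \<le> CARD('n \<times> 'n)" using dim_subset_UNIV_cart_gen[of ?V] by simp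
  finally show ?thesis using card_image[OF inj2] by simp
qed


lemma W_rank:
  fixes e :: "nat \<Rightarrow> complex^'n^'n"
  shows "CARD('n) \<le> rank (W e xs) + sum_list (map (\<lambda>t. CARD('n) - rank (e t ** e t)) xs)"
proof (induction xs)
  case Nil
  then show ?case by (simp add: rank_mat1)
next
  case (Cons t xs)
  have "rank (e t ** e t) + rank (W e xs) \<le> rank ((e t ** e t) ** W e xs) + CARD('n)"
    by (rule sylvester)
  moreover have "rank (e t ** e t) \<le> CARD('n)" by (rule rank_le_card)
  moreover have "sum_list (map (\<lambda>t. CARD('n) - rank (e t ** e t)) (t#xs))
     = (CARD('n) - rank (e t ** e t)) + sum_list (map (\<lambda>t. CARD('n) - rank (e t ** e t)) xs)" by simp
  moreover have "rank (W e (t#xs)) = rank ((e t ** e t) ** W e xs)" by simp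
  ultimately show ?case using Cons.IH by linarith
qed

lemma sl_bound: "(\<forall>x\<in>set xs. f x \<le> (d::nat)) \<Longrightarrow> sum_list (map f xs) \<le> length xs * d"
proof (induction xs)
  case (Cons x xs)
  then have "f x \<le> d" "sum_list (map f xs) \<le> length xs * d" by auto
  then show ?case by simp
qed simp

lemma W_nz:
  fixes e :: "nat \<Rightarrow> complex^'n^'n"
  assumes "\<forall>t\<in>set xs. CARD('n) - rank (e t ** e t) \<le> d" "length xs * d < CARD('n)"
  shows "W e xs \<noteq> 0"
proof
  assume "W e xs = 0"
  then have "rank (W e xs) = 0" by (simp add: rank_zero)
  moreover have "sum_list (map (\<lambda>t. CARD('n) - rank (e t ** e t)) xs) \<le> length xs * d"
    by (rule sl_bound) (use assms(1) in simp)
  ultimately show False using W_rank[of e xs] assms(2) by linarith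
qed

theorem theorem4p3:
  fixes e :: "nat \<Rightarrow> complex^'n^'n" and k :: nat
  defines "n \<equiv> CARD('n)"
  defines "r \<equiv> Min ((\<lambda>i. rank (e i ** e i)) ` {..<k})"
  assumes anti: "anticommuting k e"
  shows "(\<forall>c::nat. c > 0 \<longrightarrow> real r > real n * (1 - 1 / real c)
            \<longrightarrow> real k \<le> real c * real n powr (2 / real c))
       \<and> (real r > real n * (1 - 1 / (2 * (log 2 (real n) + 1)))
            \<longrightarrow> real k \<le> 2 * log 2 (real n) + 1)"
proof -
  have n1: "n \<ge> 1" unfolding n_def by (simp add: Suc_leI)
  have rle: "r \<le> rank (e i ** e i)" if "i < k" for i
    unfolding r_def using that by (intro Min_le) auto
  have rn: "r \<le> n" if "k > 0"
    using rle[OF that] rank_le_card[of "e 0 ** e 0"] unfolding n_def by linarith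
  \<comment> \<open>general counting for families of subsets\<close>
  have key: "card F \<le> n * n"
    if F: "F \<subseteq> Pow {..<k}" and par: "\<forall>S\<in>F. even (card S) = even p"
      and sz: "\<forall>S\<in>F. card S * (n - r) < n" for F and p :: nat
  proof -
    have "\<forall>S\<in>F. W e (sorted_list_of_set S) \<noteq> 0"
    proof
      fix S assume S: "S \<in> F"
      then have Sk: "S \<subseteq> {..<k}" using F by auto
      then have finS: "finite S" using finite_subset by blast
      show "W e (sorted_list_of_set S) \<noteq> 0"
      proof (rule W_nz)
        show "\<forall>t\<in>set (sorted_list_of_set S). CARD('n) - rank (e t ** e t) \<le> n - r"
          using finS Sk rle unfolding n_def by (auto intro: diff_le_mono2)
        show "length (sorted_list_of_set S) * (n - r) < CARD('n)"
          using sz S finS unfolding n_def by simp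
      qed
    qed
    then show ?thesis using count[OF anti F par] unfolding n_def by blast
  qed
  show ?thesis
  proof (intro conjI allI impI)
    fix c :: nat assume c0: "c > 0" and hr: "real r > real n * (1 - 1 / real c)"
    have pw1: "1 \<le> real n powr (2 / real c)" using n1 by (intro ge_one_powr_ge_zero) auto
    show "real k \<le> real c * real n powr (2 / real c)"
    proof (cases "k < c")
      case True
      then have "real k \<le> real c" by simp
      also have "\<dots> \<le> real c * real n powr (2 / real c)" using mult_left_mono[OF pw1, of "real c"] by simp
      finally show ?thesis .
    next
      case False
      then have kc: "c \<le> k" by simp
      then have k0: "k > 0" using c0 by simp
      have rn': "r \<le> n" using rn[OF k0] .
      have cd: "c * (n - r) < n"
      proof -
        have "real n * (1 - 1 / real c) = real n - real n / real c" by (simp add: algebra_simps)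
        with hr have "real n - real r < real n / real c" by linarith
        then have "real c * (real n - real r) < real c * (real n / real c)"
          using c0 by (intro mult_strict_left_mono) auto
        also have "real c * (real n / real c) = real n" using c0 by simp
        finally have "real c * (real n - real r) < real n" .
        then have "real (c * (n - r)) < real n" using rn' by (simp add: of_nat_diff)
        then show ?thesis by linarith
      qed
      let ?F = "{S. S \<subseteq> {..<k} \<and> card S = c}"
      have "card ?F \<le> n * n" by (rule key[of ?F c]) (use cd in auto)
      moreover have "card ?F = k choose c" using n_subsets[of "{..<k}" c] by simp
      ultimately have bin: "k choose c \<le> n * n" by simp
      have "(real k / real c) ^ c \<le> real (k choose c)" by (rule binomial_ge_n_over_k_pow_k[OF kc])
      also have "\<dots> \<le> real n ^ 2" using bin by (simp add: power2_eq_square flip: of_nat_mult)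
      finally have h: "(real k / real c) ^ c \<le> real n ^ 2" .
      have kpos: "real k / real c > 0" using k0 c0 by simp
      have "((real k / real c) ^ c) powr (1 / real c) = ((real k / real c) powr real c) powr (1 / real c)"
        using kpos by (simp add: powr_realpow)
      also have "\<dots> = (real k / real c) powr (real c * (1 / real c))" by (rule powr_powr)
      also have "\<dots> = real k / real c" using c0 kpos by simp
      finally have "real k / real c = ((real k / real c) ^ c) powr (1 / real c)" by simp
      also have "\<dots> \<le> (real n ^ 2) powr (1 / real c)"
        using h kpos by (intro powr_mono2) auto
      also have "\<dots> = real n powr (2 / real c)"
      proof -
        have "(real n ^ 2) powr (1 / real c) = (real n powr real (2::nat)) powr (1 / real c)"
          using n1 by (simp add: powr_realpow)
        also have "\<dots> = real n powr (real (2::nat) * (1 / real c))" by (rule powr_powr)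
        finally show ?thesis by simp
      qed
      finally have "real k / real c \<le> real n powr (2 / real c)" .
      then show ?thesis using c0 by (simp add: field_simps)
    qed
  next
    let ?L = "log 2 (real n)"
    assume hr: "real r > real n * (1 - 1 / (2 * (?L + 1)))"
    have L0: "?L \<ge> 0" using n1 by simp
    show "real k \<le> 2 * ?L + 1"
    proof (rule ccontr)
      assume "\<not> real k \<le> 2 * ?L + 1"
      then have kL: "real k > 2 * ?L + 1" by simp
      define m where "m = nat \<lfloor>2 * ?L + 1\<rfloor> + 1"
      have fl1: "\<lfloor>2 * ?L + 1\<rfloor> \<ge> 1" using L0 by linarith
      have m1: "real m > 2 * ?L + 1" unfolding m_def using fl1
        by (simp add: of_nat_nat) linarith
      have m2: "real m \<le> 2 * ?L + 2" unfolding m_def using fl1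
        by (simp add: of_nat_nat)
      have mk: "m \<le> k"
      proof -
        have "\<lfloor>2 * ?L + 1\<rfloor> < int k" using kL by linarith
        then have "nat \<lfloor>2 * ?L + 1\<rfloor> < k" using fl1 by (subst nat_less_iff) auto
        then show ?thesis unfolding m_def by simp
      qed
      have mpos: "m \<ge> 1" unfolding m_def by simp
      have k0: "k > 0" using mk mpos by simp
      have rn': "r \<le> n" using rn[OF k0] .
      have szm: "j * (n - r) < n" if "j \<le> m" for j
      proof -
        have "real n * (1 - 1 / (2 * (?L + 1))) = real n - real n / (2 * (?L + 1))"
          by (simp add: algebra_simps)
        with hr have "real n - real r < real n / (2 * (?L + 1))" by linarith
        then have "(2 * (?L + 1)) * (real n - real r) < (2 * (?L + 1)) * (real n / (2 * (?L + 1)))"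
          using L0 by (intro mult_strict_left_mono) auto
        also have "(2 * (?L + 1)) * (real n / (2 * (?L + 1))) = real n" using L0 by simp
        finally have a: "(2 * (?L + 1)) * (real n - real r) < real n" .
        have "real j * (real n - real r) \<le> (2 * (?L + 1)) * (real n - real r)"
          using that m2 rn' by (intro mult_right_mono) auto
        with a have "real (j * (n - r)) < real n" using rn' by (simp add: of_nat_diff)
        then show ?thesis by linarith
      qed
      define g where "g S = (if even (card S) then S else insert (m - 1) S)" for S :: "nat set"
      let ?F = "g ` Pow {..<m - 1}"
      have gsub: "g S \<subseteq> {..<m}" if "S \<subseteq> {..<m - 1}" for S
      proof (cases "even (card S)")
        case True
        then show ?thesis using that unfolding g_def by auto
      next
        case False
        then have "g S = insert (m - 1) S" unfolding g_def by simp
        moreover have "m - 1 < m" using mpos by simp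
        ultimately show ?thesis using that by auto
      qed
      have geven: "even (card (g S))" if "S \<subseteq> {..<m - 1}" for S
      proof -
        have "finite S" using that finite_subset by blast
        moreover have "m - 1 \<notin> S" using that by auto
        ultimately show ?thesis unfolding g_def by auto
      qed
      have ginj: "inj_on g (Pow {..<m - 1})"
      proof (rule inj_onI)
        fix S T assume ST: "S \<in> Pow {..<m - 1}" "T \<in> Pow {..<m - 1}" "g S = g T"
        have h: "g X \<inter> {..<m - 1} = X" if "X \<subseteq> {..<m - 1}" for X
          using that unfolding g_def by auto
        have "S = g S \<inter> {..<m - 1}" using h[of S] ST(1) by blast
        also have "\<dots> = g T \<inter> {..<m - 1}" using ST(3) by simp
        also have "\<dots> = T" using h[of T] ST(2) by blast
        finally show "S = T" .
      qed
      have "card ?F \<le> n * n"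
      proof (rule key[of ?F 0])
        show "?F \<subseteq> Pow {..<k}"
        proof
          fix S assume "S \<in> ?F"
          then obtain X where X: "X \<subseteq> {..<m - 1}" "S = g X" by auto
          then have "S \<subseteq> {..<m}" using gsub by blast
          also have "{..<m} \<subseteq> {..<k}" using mk by auto
          finally show "S \<in> Pow {..<k}" by simp
        qed
        show "\<forall>S\<in>?F. even (card S) = even (0::nat)" using geven by auto
        show "\<forall>S\<in>?F. card S * (n - r) < n"
        proof
          fix S assume "S \<in> ?F"
          then obtain X where X: "X \<subseteq> {..<m - 1}" "S = g X" by auto
          then have "card S \<le> card {..<m}" using gsub[OF X(1)] by (intro card_mono) auto
          then show "card S * (n - r) < n" using szm by simp
        qed
      qed
      moreover have "card ?F = 2 ^ (m - 1)"
        using card_image[OF ginj] by (simp add: card_Pow)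
      ultimately have "2 ^ (m - 1) \<le> n * n" by simp
      then have "real (2 ^ (m - 1)) \<le> real n ^ 2"
        by (simp add: power2_eq_square flip: of_nat_mult of_nat_le_iff)
      then have "(2::real) ^ (m - 1) \<le> real n ^ 2" by simp
      then have "log 2 ((2::real) ^ (m - 1)) \<le> log 2 (real n ^ 2)"
        by (rule log_mono[rotated 2]) auto
      moreover have "log 2 ((2::real) ^ (m - 1)) = real (m - 1)"
        by (simp add: log_nat_power)
      moreover have "log 2 (real n ^ 2) = 2 * ?L"
        by (simp add: log_nat_power)
      ultimately have "real (m - 1) \<le> 2 * ?L" by simp
      then have "real m \<le> 2 * ?L + 1" using mpos by (simp add: of_nat_diff)
      then show False using m1 by simp
    qed
  qed
qed

end
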